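(* Let $\{\mathbf{A}_l\}_{1\le l\le N}$ be $n\times n$ complex matrices and $\{\mathbf{B}_l\}_{1\le l\le N}$, $\{\mathbf{C}_l\}_{1\le l\le N}$ be $n\times n$ matrices with nonnegative entries such that $|[\mathbf{A}_l]_{i,j}|\le\sqrt{[\mathbf{B}_l]_{i,j}[\mathbf{C}_l]_{i,j}}$ for all $l,i,j$. Let $\mathbf{A}=\prod_{l=1}^N\mathbf{A}_l$, $\mathbf{B}=\prod_{l=1}^N\mathbf{B}_l$, $\mathbf{C}=\prod_{l=1}^N\mathbf{C}_l$. Then $|[\mathbf{A}]_{i,j}|\le\sqrt{[\mathbf{B}]_{i,j}[\mathbf{C}]_{i,j}}$ for all $i,j$ and $\rho(\mathbf{A})\le\sqrt{\rho(\mathbf{B})\rho(\mathbf{C})}$. Moreover, if $\max(\rho(\mathbf{B}),\rho(\mathbf{C}))<1$, then $$\|(\mathbf{I}_n-\mathbf{A})^{-1}\|_\infty\le\sqrt{\|(\mathbf{I}_n-\mathbf{B})^{-1}\|_\infty\|(\mathbf{I}_n-\mathbf{C})^{-1}\|_\infty},\quad \|(\mathbf{I}_n-\mathbf{A})^{-1}\|_1\le\sqrt{\|(\mathbf{I}_n-\mathbf{B})^{-1}\|_1\|(\mathbf{I}_n-\mathbf{C})^{-1}\|_1}.$$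
   Context: $\rho(\cdot)$ is the spectral radius; $\|\mathbf{M}\|_\infty=\max_i\sum_j|[\mathbf{M}]_{i,j}|$ (max row sum) and $\|\mathbf{M}\|_1=\max_j\sum_i|[\mathbf{M}]_{i,j}|$ (max column sum). *)

theory Defs
  imports "Jordan_Normal_Form.Spectral_Radius" "Jordan_Normal_Form.Gauss_Jordan_Elimination"
begin

definition mat_list_prod :: "nat \<Rightarrow> 'a::semiring_1 mat list \<Rightarrow> 'a mat" where
  "mat_list_prod n Ms = foldr (\<lambda>M P. M * P) Ms (1\<^sub>m n)"

text \<open>Maximum row sum norm (insert 0 only matters for the empty 0 x 0 matrix).\<close>
definition norm_inf_mat :: "'a::real_normed_field mat \<Rightarrow> real" where
  "norm_inf_mat M = Max (insert 0 ((\<lambda>i. \<Sum>j<dim_col M. norm (M $$ (i, j))) ` {..<dim_row M}))"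

definition norm_one_mat :: "'a::real_normed_field mat \<Rightarrow> real" where
  "norm_one_mat M = Max (insert 0 ((\<lambda>j. \<Sum>i<dim_row M. norm (M $$ (i, j))) ` {..<dim_col M}))"

end

theory Submission
  imports Defs
begin


lemma sqrt_add_le:
  fixes a b c d :: real
  assumes "0 \<le> a" "0 \<le> b" "0 \<le> c" "0 \<le> d"
  shows "sqrt (a*b) + sqrt (c*d) \<le> sqrt ((a+c)*(b+d))"
proof -
  have "2 * sqrt (a*d) * sqrt (c*b) \<le> a*d + c*b"
  proof -
    have "0 \<le> (sqrt (a*d) - sqrt (c*b))^2" by simp
    thus ?thesis using assms by (simp add: power2_eq_square algebra_simps real_sqrt_mult)
  qed
  hence "(sqrt (a*b) + sqrt (c*d))^2 \<le> (a+c)*(b+d)"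
    using assms by (simp add: power2_eq_square algebra_simps real_sqrt_mult)
  thus ?thesis using assms by (meson real_le_rsqrt)
qed

lemma sum_sqrt_le:
  fixes a b :: "'i \<Rightarrow> real"
  assumes "finite K" "\<And>k. k \<in> K \<Longrightarrow> 0 \<le> a k" "\<And>k. k \<in> K \<Longrightarrow> 0 \<le> b k"
  shows "(\<Sum>k\<in>K. sqrt (a k * b k)) \<le> sqrt (sum a K * sum b K)"
  using assms
proof (induction K rule: finite_induct)
  case empty
  then show ?case by simp
next
  case (insert x F)
  have "(\<Sum>k\<in>insert x F. sqrt (a k * b k)) = sqrt (a x * b x) + (\<Sum>k\<in>F. sqrt (a k * b k))"
    using insert by simp
  also have "\<dots> \<le> sqrt (a x * b x) + sqrt (sum a F * sum b F)" using insert by simp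
  also have "\<dots> \<le> sqrt ((a x + sum a F) * (b x + sum b F))"
    by (rule sqrt_add_le) (use insert in \<open>auto intro: sum_nonneg\<close>)
  finally show ?case using insert by simp
qed

lemma mult_entry:
  assumes "A \<in> carrier_mat n n" "B \<in> carrier_mat n n" "i < n" "j < n"
  shows "(A * B) $$ (i,j) = (\<Sum>k<n. A $$ (i,k) * B $$ (k,j))"
  using assms by (auto simp add: scalar_prod_def lessThan_atLeast0 intro!: sum.cong)


definition domi :: "nat \<Rightarrow> complex mat \<Rightarrow> real mat \<Rightarrow> real mat \<Rightarrow> bool" where
  "domi n X P Q \<longleftrightarrow> X \<in> carrier_mat n n \<and> P \<in> carrier_mat n n \<and> Q \<in> carrier_mat n n \<and>
    (\<forall>i<n. \<forall>j<n. 0 \<le> P $$ (i,j) \<and> 0 \<le> Q $$ (i,j) \<and> cmod (X $$ (i,j)) \<le> sqrt (P $$ (i,j) * Q $$ (i,j)))"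

lemma domi_one: "domi n (1\<^sub>m n) (1\<^sub>m n) (1\<^sub>m n)"
  unfolding domi_def by auto

lemma domi_mult:
  assumes X: "domi n X P Q" and Y: "domi n Y R S"
  shows "domi n (X * Y) (P * R) (Q * S)"
proof -
  have c: "X \<in> carrier_mat n n" "P \<in> carrier_mat n n" "Q \<in> carrier_mat n n"
     "Y \<in> carrier_mat n n" "R \<in> carrier_mat n n" "S \<in> carrier_mat n n"
    using X Y unfolding domi_def by auto
  have "0 \<le> (P * R) $$ (i,j) \<and> 0 \<le> (Q * S) $$ (i,j) \<and>
        cmod ((X * Y) $$ (i,j)) \<le> sqrt ((P * R) $$ (i,j) * (Q * S) $$ (i,j))"
    if ij: "i < n" "j < n" for i j
  proof -
    have e: "(X * Y) $$ (i,j) = (\<Sum>k<n. X $$ (i,k) * Y $$ (k,j))"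
       "(P * R) $$ (i,j) = (\<Sum>k<n. P $$ (i,k) * R $$ (k,j))"
       "(Q * S) $$ (i,j) = (\<Sum>k<n. Q $$ (i,k) * S $$ (k,j))"
      using mult_entry c ij by blast+
    have nn: "0 \<le> P $$ (i,k) * R $$ (k,j)" "0 \<le> Q $$ (i,k) * S $$ (k,j)" if "k < n" for k
      using X Y that ij unfolding domi_def by auto
    have "cmod ((X * Y) $$ (i,j)) \<le> (\<Sum>k<n. cmod (X $$ (i,k) * Y $$ (k,j)))"
      unfolding e by (rule norm_sum)
    also have "\<dots> \<le> (\<Sum>k<n. sqrt ((P $$ (i,k) * R $$ (k,j)) * (Q $$ (i,k) * S $$ (k,j))))"
    proof (rule sum_mono)
      fix k assume "k \<in> {..<n}"
      hence k: "k < n" by auto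
      have "cmod (X $$ (i,k) * Y $$ (k,j)) = cmod (X $$ (i,k)) * cmod (Y $$ (k,j))"
        by (simp add: norm_mult)
      also have "\<dots> \<le> sqrt (P $$ (i,k) * Q $$ (i,k)) * sqrt (R $$ (k,j) * S $$ (k,j))"
        using X Y k ij unfolding domi_def by (intro mult_mono) auto
      also have "\<dots> = sqrt ((P $$ (i,k) * R $$ (k,j)) * (Q $$ (i,k) * S $$ (k,j)))"
        by (simp add: real_sqrt_mult[symmetric] algebra_simps)
      finally show "cmod (X $$ (i,k) * Y $$ (k,j)) \<le> sqrt ((P $$ (i,k) * R $$ (k,j)) * (Q $$ (i,k) * S $$ (k,j)))" .
    qed
    also have "\<dots> \<le> sqrt ((P * R) $$ (i,j) * (Q * S) $$ (i,j))"
      unfolding e by (rule sum_sqrt_le) (use nn in auto)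
    finally show ?thesis unfolding e using nn by (auto intro: sum_nonneg)
  qed
  thus ?thesis unfolding domi_def using c by auto
qed

lemma domi_list:
  assumes "length As = length Bs" "length Cs = length Bs"
    "\<forall>l<length Bs. domi n (As ! l) (Bs ! l) (Cs ! l)"
  shows "domi n (mat_list_prod n As) (mat_list_prod n Bs) (mat_list_prod n Cs)"
  using assms
proof (induction Bs arbitrary: As Cs)
  case Nil
  then show ?case by (simp add: mat_list_prod_def domi_one)
next
  case (Cons b Bs)
  then obtain a As' c Cs' where As: "As = a # As'" and Cs: "Cs = c # Cs'"
    by (metis length_Suc_conv)
  have "domi n a b c" using Cons.prems(3) As Cs by fastforce
  moreover have "domi n (mat_list_prod n As') (mat_list_prod n Bs) (mat_list_prod n Cs')"
    using Cons.IH[of As' Cs'] Cons.prems As Cs by fastforce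
  ultimately show ?case using domi_mult unfolding As Cs mat_list_prod_def by simp
qed

lemma domi_pow:
  assumes "domi n X P Q"
  shows "domi n (X ^\<^sub>m k) (P ^\<^sub>m k) (Q ^\<^sub>m k)"
proof -
  have d: "dim_row X = n" "dim_row P = n" "dim_row Q = n" using assms unfolding domi_def by auto
  show ?thesis by (induction k) (use assms domi_one domi_mult d in auto)
qed



lemma smult_mat_vec: assumes "M \<in> carrier_mat n n" "v \<in> carrier_vec n"
  shows "((c::'a::comm_ring_1) \<cdot>\<^sub>m M) *\<^sub>v v = c \<cdot>\<^sub>v (M *\<^sub>v v)"
  by (rule eq_vecI) (use assms in \<open>auto simp: scalar_prod_def sum_distrib_left ac_simps\<close>)

lemma smult_pow_mat:
  assumes M: "M \<in> carrier_mat n n"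
  shows "((c::'a::comm_ring_1) \<cdot>\<^sub>m M) ^\<^sub>m k = (c ^ k) \<cdot>\<^sub>m (M ^\<^sub>m k)"
proof (induction k)
  case 0
  then show ?case using M by (auto intro!: eq_matI)
next
  case (Suc k)
  have "(c \<cdot>\<^sub>m M) ^\<^sub>m Suc k = ((c ^ k) \<cdot>\<^sub>m (M ^\<^sub>m k)) * (c \<cdot>\<^sub>m M)" using Suc by simp
  also have "\<dots> = (c ^ Suc k) \<cdot>\<^sub>m (M ^\<^sub>m Suc k)"
    using M by (simp add: mult_smult_assoc_mat[of _ n n _ n] mult_smult_distrib[of _ n n _ n] ac_simps)
       (rule eq_matI, auto)
  finally show ?case .
qed

lemma pow_bound:
  fixes M :: "complex mat"
  assumes M: "M \<in> carrier_mat n n" and n: "0 < n" and b: "0 < \<beta>" and r: "spectral_radius M < \<beta>"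
  shows "\<exists>c. \<forall>k i j. i < n \<longrightarrow> j < n \<longrightarrow> cmod ((M ^\<^sub>m k) $$ (i,j)) \<le> c * \<beta> ^ k"
proof -
  define M' where "M' = (complex_of_real (1/\<beta>)) \<cdot>\<^sub>m M"
  have M': "M' \<in> carrier_mat n n" using M unfolding M'_def by auto
  have "spectral_radius M' < 1"
  proof -
    obtain \<mu> where mu: "\<mu> \<in> spectrum M'" "spectral_radius M' = cmod \<mu>"
      using spectral_radius_mem_max(1)[OF M' n] by auto
    from mu obtain v where ev: "eigenvector M' v \<mu>" unfolding spectrum_def eigenvalue_def by auto
    have "eigenvector M v (complex_of_real \<beta> * \<mu>)"
    proof -
      have v: "v \<in> carrier_vec n" using ev M' unfolding eigenvector_def by auto
      have "M' *\<^sub>v v = \<mu> \<cdot>\<^sub>v v" using ev unfolding eigenvector_def by auto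
      hence "complex_of_real \<beta> \<cdot>\<^sub>v (M' *\<^sub>v v) = complex_of_real \<beta> \<cdot>\<^sub>v (\<mu> \<cdot>\<^sub>v v)" by simp
      moreover have "complex_of_real \<beta> \<cdot>\<^sub>v (M' *\<^sub>v v) = M *\<^sub>v v"
        unfolding M'_def smult_mat_vec[OF M v] smult_smult_assoc using b
        by (simp flip: of_real_mult)
      ultimately have "M *\<^sub>v v = (complex_of_real \<beta> * \<mu>) \<cdot>\<^sub>v v" by (simp add: smult_smult_assoc)
      thus ?thesis using ev M M' unfolding eigenvector_def by auto
    qed
    hence "cmod (complex_of_real \<beta> * \<mu>) \<in> cmod ` spectrum M" unfolding spectrum_def eigenvalue_def by auto
    from spectral_radius_mem_max(2)[OF M n this] b have "\<beta> * cmod \<mu> \<le> spectral_radius M"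
      by (simp add: norm_mult)
    hence "\<beta> * cmod \<mu> < \<beta> * 1" using r by simp
    thus ?thesis using mu b by simp
  qed
  from spectral_radius_jnf_norm_bound_less_1_upper_triangular[OF M' this]
  obtain c where c: "\<And>k. norm_bound (M' ^\<^sub>m k) c" by auto
  show ?thesis
  proof (intro exI allI impI)
    fix k i j assume ij: "i < n" "j < n"
    have "M' ^\<^sub>m k = (complex_of_real (1/\<beta>) ^ k) \<cdot>\<^sub>m (M ^\<^sub>m k)" unfolding M'_def
      by (rule smult_pow_mat[OF M])
    hence "(M' ^\<^sub>m k) $$ (i,j) = complex_of_real (1/\<beta>) ^ k * (M ^\<^sub>m k) $$ (i,j)"
      using ij M by simp
    moreover have "cmod ((M' ^\<^sub>m k) $$ (i,j)) \<le> c" using c[of k] ij M' unfolding norm_bound_def by auto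
    moreover have "cmod (1 / complex_of_real \<beta>) = 1/\<beta>" using b by (simp add: norm_divide)
    ultimately have "(1/\<beta>) ^ k * cmod ((M ^\<^sub>m k) $$ (i,j)) \<le> c" using b
      by (simp add: norm_mult norm_power)
    hence "\<beta>^k * ((1/\<beta>) ^ k * cmod ((M ^\<^sub>m k) $$ (i,j))) \<le> \<beta>^k * c" using b
      by (intro mult_left_mono) auto
    thus "cmod ((M ^\<^sub>m k) $$ (i,j)) \<le> c * \<beta>^k" using b by (simp add: power_one_over field_simps)
  qed
qed



lemma inv_series:
  fixes M :: "'a::real_normed_field mat"
  assumes M: "M \<in> carrier_mat n n"
    and lim: "\<forall>i<n. \<forall>j<n. (\<lambda>k. (M ^\<^sub>m k) $$ (i,j)) \<longlonglongrightarrow> 0"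
  shows "\<exists>X. mat_inverse (1\<^sub>m n - M) = Some X \<and> X \<in> carrier_mat n n \<and>
     (\<forall>i<n. \<forall>j<n. (\<lambda>m. \<Sum>k<m. (M ^\<^sub>m k) $$ (i,j)) \<longlonglongrightarrow> X $$ (i,j))"
proof -
  let ?I = "1\<^sub>m n - M"
  have I: "?I \<in> carrier_mat n n" using M by auto
  have "det ?I \<noteq> 0"
  proof
    assume "det ?I = 0"
    then obtain v where v: "v \<in> carrier_vec n" "v \<noteq> 0\<^sub>v n" "?I *\<^sub>v v = 0\<^sub>v n"
      using det_0_iff_vec_prod_zero_field[OF I] by auto
    have "(M *\<^sub>v v) $ i = v $ i" if i: "i < n" for i
    proof -
      have "(?I *\<^sub>v v) $ i = v $ i - (M *\<^sub>v v) $ i"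
        using i v(1) M by (simp add: minus_mult_distrib_mat_vec[OF one_carrier_mat M v(1)])
      thus ?thesis using v(3) i by simp
    qed
    hence Mv: "M *\<^sub>v v = v" using M v by (intro eq_vecI) auto
    have pow: "M ^\<^sub>m k *\<^sub>v v = v" for k
    proof (induction k)
      case 0
      then show ?case using v(1) M by simp
    next
      case (Suc k)
      have "M ^\<^sub>m Suc k *\<^sub>v v = M ^\<^sub>m k *\<^sub>v (M *\<^sub>v v)"
        using M v by (simp del: assoc_mult_mat_vec add: assoc_mult_mat_vec[of _ n n _ n])
      then show ?case using Mv Suc by simp
    qed
    have "v $ i = 0" if i: "i < n" for i
    proof -
      have e: "v $ i = (\<Sum>j<n. (M ^\<^sub>m k) $$ (i,j) * v $ j)" for k
      proof -
        have "v $ i = (M ^\<^sub>m k *\<^sub>v v) $ i" using pow by simp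
        also have "\<dots> = (\<Sum>j<n. (M ^\<^sub>m k) $$ (i,j) * v $ j)"
          using i M v by (auto simp: scalar_prod_def lessThan_atLeast0 intro!: sum.cong)
        finally show ?thesis .
      qed
      have "(\<lambda>k. \<Sum>j<n. (M ^\<^sub>m k) $$ (i,j) * v $ j) \<longlonglongrightarrow> (\<Sum>j<n. 0 * v $ j)"
        by (intro tendsto_sum tendsto_mult tendsto_const) (use lim i in auto)
      hence "(\<lambda>k. v $ i) \<longlonglongrightarrow> 0" unfolding e[symmetric] by simp
      thus ?thesis by (simp add: LIMSEQ_const_iff)
    qed
    hence "v = 0\<^sub>v n" using v by (intro eq_vecI) auto
    thus False using v by simp
  qed
  hence "?I \<in> Units (ring_mat TYPE('a) n n)" by (rule det_non_zero_imp_unit[OF I])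
  hence "mat_inverse ?I \<noteq> None" using mat_inverse(1)[OF I, of n] by blast
  then obtain X where Xd: "mat_inverse ?I = Some X" by auto
  from mat_inverse(2)[OF I this] have IX: "?I * X = 1\<^sub>m n" and X: "X \<in> carrier_mat n n" by auto
  have "?I * X = X - M * X" using M X by (simp add: minus_mult_distrib_mat[OF one_carrier_mat M X])
  hence XE: "X = 1\<^sub>m n + M * X" using IX M X by (intro eq_matI) (auto dest!: arg_cong[of _ _ "\<lambda>A. A $$ (_,_)"])
  have rec: "X $$ (i,j) = (\<Sum>k<m. (M ^\<^sub>m k) $$ (i,j)) + (M ^\<^sub>m m * X) $$ (i,j)"
    if ij: "i < n" "j < n" for i j m
  proof (induction m)
    case 0
    then show ?case using X ij M by simp
  next
    case (Suc m)
    have Mm: "M ^\<^sub>m m \<in> carrier_mat n n" using M by simp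
    have "M ^\<^sub>m m * X = M ^\<^sub>m m * (1\<^sub>m n + M * X)" using XE by simp
    also have "\<dots> = M ^\<^sub>m m + M ^\<^sub>m Suc m * X"
      using Mm M X by (simp add: mult_add_distrib_mat[OF Mm, of _ n] assoc_mult_mat[OF Mm M X])
    finally have "(M ^\<^sub>m m * X) $$ (i,j) = (M ^\<^sub>m m) $$ (i,j) + (M ^\<^sub>m Suc m * X) $$ (i,j)"
      using ij M X by simp
    then show ?case using Suc by simp
  qed
  have "(\<lambda>m. \<Sum>k<m. (M ^\<^sub>m k) $$ (i,j)) \<longlonglongrightarrow> X $$ (i,j)" if ij: "i < n" "j < n" for i j
  proof -
    have e: "(M ^\<^sub>m m * X) $$ (i,j) = (\<Sum>l<n. (M ^\<^sub>m m) $$ (i,l) * X $$ (l,j))" for m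
      using mult_entry[of "M ^\<^sub>m m" n X i j] M X ij by simp
    have "(\<lambda>m. \<Sum>l<n. (M ^\<^sub>m m) $$ (i,l) * X $$ (l,j)) \<longlonglongrightarrow> (\<Sum>l<n. 0 * X $$ (l,j))"
      by (intro tendsto_sum tendsto_mult tendsto_const) (use lim ij in auto)
    hence "(\<lambda>m. X $$ (i,j) - (M ^\<^sub>m m * X) $$ (i,j)) \<longlonglongrightarrow> X $$ (i,j) - 0"
      unfolding e by (intro tendsto_diff tendsto_const) simp
    moreover have "X $$ (i,j) - (M ^\<^sub>m m * X) $$ (i,j) = (\<Sum>k<m. (M ^\<^sub>m k) $$ (i,j))" for m
      using rec[OF ij, of m] by simp
    ultimately show ?thesis by simp
  qed
  thus ?thesis using Xd X by blast
qed



lemma realbound: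
  fixes P :: "real mat"
  assumes P: "P \<in> carrier_mat n n" and n: "0 < n" and b: "0 < \<beta>"
    and r: "spectral_radius (map_mat complex_of_real P) < \<beta>"
  shows "\<exists>c. \<forall>k i j. i < n \<longrightarrow> j < n \<longrightarrow> \<bar>(P ^\<^sub>m k) $$ (i,j)\<bar> \<le> c * \<beta> ^ k"
proof -
  have Pc: "map_mat complex_of_real P \<in> carrier_mat n n" using P by simp
  obtain c where c: "\<And>k i j. i < n \<Longrightarrow> j < n \<Longrightarrow> cmod ((map_mat complex_of_real P ^\<^sub>m k) $$ (i,j)) \<le> c * \<beta> ^ k"
    using pow_bound[OF Pc n b r] by blast
  show ?thesis
  proof (intro exI allI impI)
    fix k i j assume ij: "i < n" "j < n"
    have "map_mat complex_of_real P ^\<^sub>m k = map_mat complex_of_real (P ^\<^sub>m k)"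
      by (rule sym, rule of_real_hom.mat_hom_pow[OF P])
    hence "(map_mat complex_of_real P ^\<^sub>m k) $$ (i,j) = complex_of_real ((P ^\<^sub>m k) $$ (i,j))"
      using ij P by simp
    thus "\<bar>(P ^\<^sub>m k) $$ (i,j)\<bar> \<le> c * \<beta> ^ k" using c[OF ij, of k] by simp
  qed
qed

lemma sr_nonneg:
  assumes "M \<in> carrier_mat n n" "0 < n"
  shows "0 \<le> spectral_radius M"
  using spectral_radius_mem_max(1)[OF assms] by auto

lemma domi_norms:
  assumes d: "domi n X P Q"
  shows "norm_inf_mat X \<le> sqrt (norm_inf_mat P * norm_inf_mat Q)
       \<and> norm_one_mat X \<le> sqrt (norm_one_mat P * norm_one_mat Q)"
proof -
  have c: "X \<in> carrier_mat n n" "P \<in> carrier_mat n n" "Q \<in> carrier_mat n n"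
    and e: "\<And>i j. i < n \<Longrightarrow> j < n \<Longrightarrow> 0 \<le> P $$ (i,j) \<and> 0 \<le> Q $$ (i,j) \<and> cmod (X $$ (i,j)) \<le> sqrt (P $$ (i,j) * Q $$ (i,j))"
    using d unfolding domi_def by auto
  have nP: "0 \<le> norm_inf_mat P" "0 \<le> norm_one_mat P" "0 \<le> norm_inf_mat Q" "0 \<le> norm_one_mat Q"
    unfolding norm_inf_mat_def norm_one_mat_def by (auto intro: Max_ge)
  have "norm_inf_mat X \<le> sqrt (norm_inf_mat P * norm_inf_mat Q)"
  proof -
    have "(\<Sum>j<n. cmod (X $$ (i,j))) \<le> sqrt (norm_inf_mat P * norm_inf_mat Q)" if i: "i < n" for i
    proof -
      have "(\<Sum>j<n. cmod (X $$ (i,j))) \<le> (\<Sum>j<n. sqrt (P $$ (i,j) * Q $$ (i,j)))"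
        using e i by (intro sum_mono) auto
      also have "\<dots> \<le> sqrt ((\<Sum>j<n. P $$ (i,j)) * (\<Sum>j<n. Q $$ (i,j)))"
        by (rule sum_sqrt_le) (use e i in auto)
      also have "\<dots> \<le> sqrt (norm_inf_mat P * norm_inf_mat Q)"
      proof -
        have "(\<Sum>j<n. P $$ (i,j)) = (\<Sum>j<n. norm (P $$ (i,j)))" using e i by (intro sum.cong) auto
        also have "\<dots> \<le> norm_inf_mat P" unfolding norm_inf_mat_def using c i by (intro Max_ge) auto
        finally have 1: "(\<Sum>j<n. P $$ (i,j)) \<le> norm_inf_mat P" .
        have "(\<Sum>j<n. Q $$ (i,j)) = (\<Sum>j<n. norm (Q $$ (i,j)))" using e i by (intro sum.cong) auto
        also have "\<dots> \<le> norm_inf_mat Q" unfolding norm_inf_mat_def using c i by (intro Max_ge) auto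
        finally have 2: "(\<Sum>j<n. Q $$ (i,j)) \<le> norm_inf_mat Q" .
        show ?thesis using 1 2 e i nP by (intro real_sqrt_le_mono mult_mono) (auto intro: sum_nonneg)
      qed
      finally show ?thesis .
    qed
    thus ?thesis unfolding norm_inf_mat_def using c by (auto simp: Max_le_iff)
  qed
  moreover have "norm_one_mat X \<le> sqrt (norm_one_mat P * norm_one_mat Q)"
  proof -
    have "(\<Sum>i<n. cmod (X $$ (i,j))) \<le> sqrt (norm_one_mat P * norm_one_mat Q)" if j: "j < n" for j
    proof -
      have "(\<Sum>i<n. cmod (X $$ (i,j))) \<le> (\<Sum>i<n. sqrt (P $$ (i,j) * Q $$ (i,j)))"
        using e j by (intro sum_mono) auto
      also have "\<dots> \<le> sqrt ((\<Sum>i<n. P $$ (i,j)) * (\<Sum>i<n. Q $$ (i,j)))"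
        by (rule sum_sqrt_le) (use e j in auto)
      also have "\<dots> \<le> sqrt (norm_one_mat P * norm_one_mat Q)"
      proof -
        have "(\<Sum>i<n. P $$ (i,j)) = (\<Sum>i<n. norm (P $$ (i,j)))" using e j by (intro sum.cong) auto
        also have "\<dots> \<le> norm_one_mat P" unfolding norm_one_mat_def using c j by (intro Max_ge) auto
        finally have 1: "(\<Sum>i<n. P $$ (i,j)) \<le> norm_one_mat P" .
        have "(\<Sum>i<n. Q $$ (i,j)) = (\<Sum>i<n. norm (Q $$ (i,j)))" using e j by (intro sum.cong) auto
        also have "\<dots> \<le> norm_one_mat Q" unfolding norm_one_mat_def using c j by (intro Max_ge) auto
        finally have 2: "(\<Sum>i<n. Q $$ (i,j)) \<le> norm_one_mat Q" .
        show ?thesis using 1 2 e j nP by (intro real_sqrt_le_mono mult_mono) (auto intro: sum_nonneg)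
      qed
      finally show ?thesis .
    qed
    thus ?thesis unfolding norm_one_mat_def using c by (auto simp: Max_le_iff)
  qed
  ultimately show ?thesis by blast
qed



lemma lin_aux: "(p::real) = q + x \<Longrightarrow> x \<le> y \<Longrightarrow> y \<le> (s - q)/2 \<Longrightarrow> 0 < s - q \<Longrightarrow> p < s"
  by (simp add: field_simps)

lemma sr_part:
  fixes A :: "complex mat" and B C :: "real mat"
  assumes d: "domi n A B C" and n: "0 < n"
  shows "spectral_radius A \<le> sqrt (spectral_radius (map_mat complex_of_real B)
                                  * spectral_radius (map_mat complex_of_real C))"
proof (rule ccontr)
  define rB where "rB = spectral_radius (map_mat complex_of_real B)"
  define rC where "rC = spectral_radius (map_mat complex_of_real C)"
  define r where "r = spectral_radius A"
  assume "\<not> ?thesis"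
  hence lt: "sqrt (rB * rC) < r" unfolding rB_def rC_def r_def by simp
  have cA: "A \<in> carrier_mat n n" and cB: "B \<in> carrier_mat n n" and cC: "C \<in> carrier_mat n n"
    using d unfolding domi_def by auto
  have rB0: "0 \<le> rB" unfolding rB_def by (rule sr_nonneg[OF _ n]) (use cB in simp)
  have rC0: "0 \<le> rC" unfolding rC_def by (rule sr_nonneg[OF _ n]) (use cC in simp)
  have "0 \<le> sqrt (rB * rC)" using rB0 rC0 by simp
  hence r0: "0 < r" using lt by linarith
  have "rB * rC = (sqrt (rB * rC))^2" using rB0 rC0 by (metis mult_nonneg_nonneg real_sqrt_pow2)
  also have "\<dots> < r^2" using lt rB0 rC0 by (intro power_strict_mono) auto
  finally have lt2: "rB * rC < r^2" .
  define g where "g = r^2 - rB * rC"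
  have g0: "0 < g" using lt2 unfolding g_def by simp
  define \<delta> where "\<delta> = min 1 (g / (rB + rC + 1)) / 2"
  have d0: "0 < \<delta>" using g0 rB0 rC0 unfolding \<delta>_def by auto
  have d1: "\<delta> \<le> 1" unfolding \<delta>_def by auto
  have d2: "\<delta> * (rB + rC + 1) \<le> g / 2"
  proof -
    have "\<delta> \<le> (g / (rB + rC + 1)) / 2" unfolding \<delta>_def by (intro divide_right_mono) auto
    hence "\<delta> * (rB + rC + 1) \<le> (g / (rB + rC + 1)) / 2 * (rB + rC + 1)"
      using rB0 rC0 by (intro mult_right_mono) auto
    moreover have "(g / (rB + rC + 1)) / 2 * (rB + rC + 1) = g / 2" using rB0 rC0 by (simp add: field_simps)
    ultimately show ?thesis by linarith
  qed
  define \<beta> where "\<beta> = rB + \<delta>"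
  define \<gamma> where "\<gamma> = rC + \<delta>"
  have b0: "0 < \<beta>" "0 < \<gamma>" using d0 rB0 rC0 unfolding \<beta>_def \<gamma>_def by auto
  have e1: "\<beta> * \<gamma> = rB * rC + \<delta> * (rB + rC + \<delta>)" unfolding \<beta>_def \<gamma>_def by (simp add: algebra_simps)
  have e2: "\<delta> * (rB + rC + \<delta>) \<le> \<delta> * (rB + rC + 1)" using d0 d1 by (intro mult_left_mono) auto
  have bg: "\<beta> * \<gamma> < r^2" by (rule lin_aux[OF e1 e2 d2[unfolded g_def] g0[unfolded g_def]])
  obtain cb where cb: "\<And>k i j. i < n \<Longrightarrow> j < n \<Longrightarrow> \<bar>(B ^\<^sub>m k) $$ (i,j)\<bar> \<le> cb * \<beta> ^ k"
    using realbound[OF cB n b0(1)] d0 unfolding \<beta>_def rB_def by fastforce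
  obtain cc where cc: "\<And>k i j. i < n \<Longrightarrow> j < n \<Longrightarrow> \<bar>(C ^\<^sub>m k) $$ (i,j)\<bar> \<le> cc * \<gamma> ^ k"
    using realbound[OF cC n b0(2)] d0 unfolding \<gamma>_def rC_def by fastforce
  obtain ev where lam: "ev \<in> spectrum A" "r = cmod ev"
    using spectral_radius_mem_max(1)[OF cA n] unfolding r_def by auto
  from lam obtain v where ev: "eigenvector A v ev" unfolding spectrum_def eigenvalue_def by auto
  have v: "v \<in> carrier_vec n" "v \<noteq> 0\<^sub>v n" using ev cA unfolding eigenvector_def by auto
  obtain i where i: "i < n" "v $ i \<noteq> 0"
  proof (rule ccontr)
    assume "\<not> thesis"
    hence "\<forall>i<n. v $ i = 0" using that by blast
    hence "v = 0\<^sub>v n" using v by (intro eq_vecI) auto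
    thus False using v by simp
  qed
  define q where "q = sqrt (\<beta> * \<gamma>)"
  define K where "K = sqrt (cb * cc) * (\<Sum>j<n. cmod (v $ j))"
  have q0: "0 < q" unfolding q_def using b0 by simp
  have qr: "q < r" unfolding q_def using bg r0
    by (metis abs_of_pos real_sqrt_abs real_sqrt_less_iff)
  have bound: "r^k * cmod (v $ i) \<le> K * q^k" for k
  proof -
    have dk: "domi n (A ^\<^sub>m k) (B ^\<^sub>m k) (C ^\<^sub>m k)" by (rule domi_pow[OF d])
    have "r^k * cmod (v $ i) = cmod ((ev^k \<cdot>\<^sub>v v) $ i)" using lam i v by (simp add: norm_mult norm_power)
    also have "ev^k \<cdot>\<^sub>v v = A ^\<^sub>m k *\<^sub>v v" by (rule eigenvector_pow[OF cA ev, symmetric])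
    also have "(A ^\<^sub>m k *\<^sub>v v) $ i = (\<Sum>j<n. (A ^\<^sub>m k) $$ (i,j) * v $ j)"
      using i cA v by (auto simp: scalar_prod_def lessThan_atLeast0 intro!: sum.cong)
    also have "cmod \<dots> \<le> (\<Sum>j<n. cmod ((A ^\<^sub>m k) $$ (i,j) * v $ j))" by (rule norm_sum)
    also have "\<dots> \<le> (\<Sum>j<n. sqrt (cb * cc) * q^k * cmod (v $ j))"
    proof (rule sum_mono)
      fix j assume "j \<in> {..<n}"
      hence j: "j < n" by simp
      have e: "0 \<le> (B ^\<^sub>m k) $$ (i,j)" "0 \<le> (C ^\<^sub>m k) $$ (i,j)"
        "cmod ((A ^\<^sub>m k) $$ (i,j)) \<le> sqrt ((B ^\<^sub>m k) $$ (i,j) * (C ^\<^sub>m k) $$ (i,j))"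
        using dk i j unfolding domi_def by auto
      have "(B ^\<^sub>m k) $$ (i,j) * (C ^\<^sub>m k) $$ (i,j) \<le> (cb * \<beta> ^ k) * (cc * \<gamma> ^ k)"
        using cb[OF i(1) j, of k] cc[OF i(1) j, of k] e by (intro mult_mono) auto
      hence "cmod ((A ^\<^sub>m k) $$ (i,j)) \<le> sqrt ((cb * \<beta> ^ k) * (cc * \<gamma> ^ k))"
        using e(3) by (meson order_trans real_sqrt_le_mono)
      also have "sqrt ((cb * \<beta> ^ k) * (cc * \<gamma> ^ k)) = sqrt (cb * cc) * q^k"
        unfolding q_def by (simp add: real_sqrt_mult real_sqrt_power power_mult_distrib)
      finally show "cmod ((A ^\<^sub>m k) $$ (i,j) * v $ j) \<le> sqrt (cb * cc) * q^k * cmod (v $ j)"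
        by (simp add: norm_mult mult_right_mono)
    qed
    also have "\<dots> = K * q^k" unfolding K_def by (simp add: sum_distrib_left ac_simps)
    finally show ?thesis .
  qed
  have x1: "1 < r / q" using qr q0 by simp
  obtain k where k: "K / cmod (v $ i) < (r/q)^k" using real_arch_pow[OF x1] by blast
  have vi: "0 < cmod (v $ i)" using i by simp
  have "(r/q)^k * cmod (v $ i) \<le> K"
  proof -
    have "(r/q)^k * cmod (v $ i) = (r^k * cmod (v $ i)) / q^k" by (simp add: power_divide)
    also have "\<dots> \<le> (K * q^k) / q^k" using bound[of k] q0 by (intro divide_right_mono) auto
    also have "\<dots> = K" using q0 by simp
    finally show ?thesis .
  qed
  hence "(r/q)^k \<le> K / cmod (v $ i)" using vi by (simp add: pos_le_divide_eq)
  thus False using k by simp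
qed



lemma lim_real:
  fixes P :: "real mat"
  assumes P: "P \<in> carrier_mat n n" and r: "spectral_radius (map_mat complex_of_real P) < 1"
  shows "\<forall>i<n. \<forall>j<n. (\<lambda>k. (P ^\<^sub>m k) $$ (i,j)) \<longlonglongrightarrow> 0"
proof (cases "n = 0")
  case True
  then show ?thesis by simp
next
  case False
  hence n: "0 < n" by simp
  define \<rho> where "\<rho> = spectral_radius (map_mat complex_of_real P)"
  have r0: "0 \<le> \<rho>" unfolding \<rho>_def by (rule sr_nonneg[OF _ n]) (use P in simp)
  define \<beta> where "\<beta> = (1 + \<rho>) / 2"
  have b: "0 < \<beta>" "\<rho> < \<beta>" "\<beta> < 1" using r0 r unfolding \<beta>_def \<rho>_def by auto
  obtain c where c: "\<And>k i j. i < n \<Longrightarrow> j < n \<Longrightarrow> \<bar>(P ^\<^sub>m k) $$ (i,j)\<bar> \<le> c * \<beta> ^ k"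
    using realbound[OF P n b(1)] b(2) unfolding \<rho>_def by blast
  show ?thesis
  proof (intro allI impI)
    fix i j assume ij: "i < n" "j < n"
    have lim: "(\<lambda>k. c * \<beta> ^ k) \<longlonglongrightarrow> c * 0"
      by (intro tendsto_mult tendsto_const LIMSEQ_power_zero) (use b in auto)
    have "(\<lambda>k. norm ((P ^\<^sub>m k) $$ (i,j))) \<longlonglongrightarrow> 0"
      by (rule real_tendsto_sandwich[where f = "\<lambda>_. 0" and h = "\<lambda>k. c * \<beta> ^ k"])
        (use lim c[OF ij] in auto)
    thus "(\<lambda>k. (P ^\<^sub>m k) $$ (i,j)) \<longlonglongrightarrow> 0" by (rule tendsto_norm_zero_cancel)
  qed
qed

lemma inv_part:
  fixes A :: "complex mat" and B C :: "real mat"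
  assumes d: "domi n A B C"
    and lt: "max (spectral_radius (map_mat complex_of_real B))
            (spectral_radius (map_mat complex_of_real C)) < 1"
  shows "norm_inf_mat (the (mat_inverse (1\<^sub>m n - A)))
           \<le> sqrt (norm_inf_mat (the (mat_inverse (1\<^sub>m n - B)))
                   * norm_inf_mat (the (mat_inverse (1\<^sub>m n - C))))
       \<and> norm_one_mat (the (mat_inverse (1\<^sub>m n - A)))
           \<le> sqrt (norm_one_mat (the (mat_inverse (1\<^sub>m n - B)))
                   * norm_one_mat (the (mat_inverse (1\<^sub>m n - C))))"
proof -
  have cA: "A \<in> carrier_mat n n" and cB: "B \<in> carrier_mat n n" and cC: "C \<in> carrier_mat n n"
    using d unfolding domi_def by auto
  have dk: "\<And>k. domi n (A ^\<^sub>m k) (B ^\<^sub>m k) (C ^\<^sub>m k)" by (rule domi_pow[OF d])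
  have limB: "\<forall>i<n. \<forall>j<n. (\<lambda>k. (B ^\<^sub>m k) $$ (i,j)) \<longlonglongrightarrow> 0"
    by (rule lim_real[OF cB]) (use lt in simp)
  have limC: "\<forall>i<n. \<forall>j<n. (\<lambda>k. (C ^\<^sub>m k) $$ (i,j)) \<longlonglongrightarrow> 0"
    by (rule lim_real[OF cC]) (use lt in simp)
  have limA: "\<forall>i<n. \<forall>j<n. (\<lambda>k. (A ^\<^sub>m k) $$ (i,j)) \<longlonglongrightarrow> 0"
  proof (intro allI impI)
    fix i j assume ij: "i < n" "j < n"
    have lim: "(\<lambda>k. sqrt ((B ^\<^sub>m k) $$ (i,j) * (C ^\<^sub>m k) $$ (i,j))) \<longlonglongrightarrow> sqrt (0 * 0)"
      by (intro tendsto_real_sqrt tendsto_mult) (use limB limC ij in auto)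
    have "(\<lambda>k. norm ((A ^\<^sub>m k) $$ (i,j))) \<longlonglongrightarrow> 0"
      by (rule real_tendsto_sandwich[where f = "\<lambda>_. 0" and h = "\<lambda>k. sqrt ((B ^\<^sub>m k) $$ (i,j) * (C ^\<^sub>m k) $$ (i,j))"])
        (use lim dk ij in \<open>auto simp: domi_def\<close>)
    thus "(\<lambda>k. (A ^\<^sub>m k) $$ (i,j)) \<longlonglongrightarrow> 0" by (rule tendsto_norm_zero_cancel)
  qed
  obtain XA where XA: "mat_inverse (1\<^sub>m n - A) = Some XA" "XA \<in> carrier_mat n n"
    "\<forall>i<n. \<forall>j<n. (\<lambda>m. \<Sum>k<m. (A ^\<^sub>m k) $$ (i,j)) \<longlonglongrightarrow> XA $$ (i,j)"
    using inv_series[OF cA limA] by blast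
  obtain XB where XB: "mat_inverse (1\<^sub>m n - B) = Some XB" "XB \<in> carrier_mat n n"
    "\<forall>i<n. \<forall>j<n. (\<lambda>m. \<Sum>k<m. (B ^\<^sub>m k) $$ (i,j)) \<longlonglongrightarrow> XB $$ (i,j)"
    using inv_series[OF cB limB] by blast
  obtain XC where XC: "mat_inverse (1\<^sub>m n - C) = Some XC" "XC \<in> carrier_mat n n"
    "\<forall>i<n. \<forall>j<n. (\<lambda>m. \<Sum>k<m. (C ^\<^sub>m k) $$ (i,j)) \<longlonglongrightarrow> XC $$ (i,j)"
    using inv_series[OF cC limC] by blast
  have "domi n XA XB XC"
  proof -
    have "0 \<le> XB $$ (i,j) \<and> 0 \<le> XC $$ (i,j) \<and> cmod (XA $$ (i,j)) \<le> sqrt (XB $$ (i,j) * XC $$ (i,j))"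
      if ij: "i < n" "j < n" for i j
    proof -
      have nn: "0 \<le> (B ^\<^sub>m k) $$ (i,j)" "0 \<le> (C ^\<^sub>m k) $$ (i,j)"
        "cmod ((A ^\<^sub>m k) $$ (i,j)) \<le> sqrt ((B ^\<^sub>m k) $$ (i,j) * (C ^\<^sub>m k) $$ (i,j))" for k
        using dk[of k] ij unfolding domi_def by auto
      have 1: "0 \<le> XB $$ (i,j)"
        by (rule LIMSEQ_le_const[OF XB(3)[rule_format, OF ij]]) (use nn in \<open>auto intro: sum_nonneg\<close>)
      have 2: "0 \<le> XC $$ (i,j)"
        by (rule LIMSEQ_le_const[OF XC(3)[rule_format, OF ij]]) (use nn in \<open>auto intro: sum_nonneg\<close>)
      have f: "(\<lambda>m. cmod (\<Sum>k<m. (A ^\<^sub>m k) $$ (i,j))) \<longlonglongrightarrow> cmod (XA $$ (i,j))"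
        by (rule tendsto_norm) (use XA(3) ij in auto)
      have g: "(\<lambda>m. sqrt ((\<Sum>k<m. (B ^\<^sub>m k) $$ (i,j)) * (\<Sum>k<m. (C ^\<^sub>m k) $$ (i,j))))
           \<longlonglongrightarrow> sqrt (XB $$ (i,j) * XC $$ (i,j))"
        by (intro tendsto_real_sqrt tendsto_mult) (use XB(3) XC(3) ij in auto)
      have "cmod (\<Sum>k<m. (A ^\<^sub>m k) $$ (i,j))
          \<le> sqrt ((\<Sum>k<m. (B ^\<^sub>m k) $$ (i,j)) * (\<Sum>k<m. (C ^\<^sub>m k) $$ (i,j)))" for m
      proof -
        have "cmod (\<Sum>k<m. (A ^\<^sub>m k) $$ (i,j)) \<le> (\<Sum>k<m. cmod ((A ^\<^sub>m k) $$ (i,j)))"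
          by (rule norm_sum)
        also have "\<dots> \<le> (\<Sum>k<m. sqrt ((B ^\<^sub>m k) $$ (i,j) * (C ^\<^sub>m k) $$ (i,j)))"
          by (intro sum_mono nn)
        also have "\<dots> \<le> sqrt ((\<Sum>k<m. (B ^\<^sub>m k) $$ (i,j)) * (\<Sum>k<m. (C ^\<^sub>m k) $$ (i,j)))"
          by (rule sum_sqrt_le) (use nn in auto)
        finally show ?thesis .
      qed
      hence 3: "cmod (XA $$ (i,j)) \<le> sqrt (XB $$ (i,j) * XC $$ (i,j))"
        by (intro LIMSEQ_le[OF f g]) auto
      show ?thesis using 1 2 3 by auto
    qed
    thus ?thesis unfolding domi_def using XA XB XC by auto
  qed
  from domi_norms[OF this] show ?thesis using XA(1) XB(1) XC(1) by simp
qed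



lemma sr_dim0: assumes "M \<in> carrier_mat 0 0" shows "spectral_radius M = Max {}"
proof -
  have "spectrum M = {}"
    using assms unfolding spectrum_def eigenvalue_def eigenvector_def by auto
  thus ?thesis unfolding spectral_radius_def by simp
qed

theorem lemma8:
  fixes n N :: nat
    and As :: "complex mat list" and Bs Cs :: "real mat list"
  assumes lenA: "length As = N" and lenB: "length Bs = N" and lenC: "length Cs = N"
    and carA: "\<forall>l<N. As ! l \<in> carrier_mat n n"
    and carB: "\<forall>l<N. Bs ! l \<in> carrier_mat n n"
    and carC: "\<forall>l<N. Cs ! l \<in> carrier_mat n n"
    and nonnegB: "\<forall>l<N. \<forall>i<n. \<forall>j<n. 0 \<le> (Bs ! l) $$ (i, j)"
    and nonnegC: "\<forall>l<N. \<forall>i<n. \<forall>j<n. 0 \<le> (Cs ! l) $$ (i, j)"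
    and dom: "\<forall>l<N. \<forall>i<n. \<forall>j<n.
               cmod ((As ! l) $$ (i, j)) \<le> sqrt ((Bs ! l) $$ (i, j) * (Cs ! l) $$ (i, j))"
  defines "A \<equiv> mat_list_prod n As"
    and "B \<equiv> mat_list_prod n Bs"
    and "C \<equiv> mat_list_prod n Cs"
  shows "(\<forall>i<n. \<forall>j<n. cmod (A $$ (i, j)) \<le> sqrt (B $$ (i, j) * C $$ (i, j)))
    \<and> spectral_radius A \<le> sqrt (spectral_radius (map_mat complex_of_real B)
                                  * spectral_radius (map_mat complex_of_real C))
    \<and> (max (spectral_radius (map_mat complex_of_real B))
            (spectral_radius (map_mat complex_of_real C)) < 1 \<longrightarrow>
         norm_inf_mat (the (mat_inverse (1\<^sub>m n - A)))
           \<le> sqrt (norm_inf_mat (the (mat_inverse (1\<^sub>m n - B)))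
                   * norm_inf_mat (the (mat_inverse (1\<^sub>m n - C))))
       \<and> norm_one_mat (the (mat_inverse (1\<^sub>m n - A)))
           \<le> sqrt (norm_one_mat (the (mat_inverse (1\<^sub>m n - B)))
                   * norm_one_mat (the (mat_inverse (1\<^sub>m n - C)))))"
proof -
  have d: "domi n A B C" unfolding A_def B_def C_def
    by (rule domi_list) (use assms in \<open>auto simp: domi_def\<close>)
  have p1: "\<forall>i<n. \<forall>j<n. cmod (A $$ (i, j)) \<le> sqrt (B $$ (i, j) * C $$ (i, j))"
    using d unfolding domi_def by auto
  have p2: "spectral_radius A \<le> sqrt (spectral_radius (map_mat complex_of_real B)
                                  * spectral_radius (map_mat complex_of_real C))"
  proof (cases "n = 0")
    case True
    have c: "A \<in> carrier_mat 0 0" "map_mat complex_of_real B \<in> carrier_mat 0 0"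
      "map_mat complex_of_real C \<in> carrier_mat 0 0"
      using d True unfolding domi_def by auto
    show ?thesis unfolding sr_dim0[OF c(1)] sr_dim0[OF c(2)] sr_dim0[OF c(3)]
      by (simp add: real_sqrt_mult_self)
  next
    case False
    then show ?thesis using sr_part[OF d] by simp
  qed
  show ?thesis using p1 p2 inv_part[OF d] by blast
qed

end
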